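(* Let $(X,\mathcal{A},\mu,T)$ be a measure-preserving system ($\mu$ a probability measure). Then: (i) $T$ is mixing if and only if for all $A,B\in\mathcal{A}$ with $\mu(B)>0$, $\limsup_{n\to\infty}\mu(A\cap T^{-n}(B))/\mu(B)\le\mu(A)$; (ii) $T$ is weakly mixing if and only if for all $A,B\in\mathcal{A}$ with $\mu(B)>0$ there is a set $\mathcal{N}=\mathcal{N}(A,B)\subset\mathbb{N}$ of zero asymptotic density such that $\limsup_{n\to\infty,\,n\notin\mathcal{N}}\mu(A\cap T^{-n}(B))/\mu(B)\le\mu(A)$; (iii) $T$ is ergodic if and only if for all $A,B\in\mathcal{A}$ with $\mu(B)>0$ there is $\mathcal{N}=\mathcal{N}(A,B)\subset\mathbb{N}$ with $\mathbb{N}\setminus\mathcal{N}$ infinite such that $\limsup_{n\to\infty,\,n\notin\mathcal{N}}\mu(A\cap T^{-n}(B))/\mu(B)\le\mu(A)$; equivalently, if and only if for all $A,B\in\mathcal{A}$ with $\mu(B)>0$, $\liminf_{n\to\infty}\mu(A\cap T^{-n}(B))/\mu(B)\le\mu(A)$. *)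

theory Defs
  imports "HOL-Probability.Probability"
begin

definition preimg_iter :: "'a measure \<Rightarrow> ('a \<Rightarrow> 'a) \<Rightarrow> nat \<Rightarrow> 'a set \<Rightarrow> 'a set" where
  "preimg_iter M T n B = (T ^^ n) -` B \<inter> space M"

definition mps :: "'a measure \<Rightarrow> ('a \<Rightarrow> 'a) \<Rightarrow> bool" where
  "mps M T \<longleftrightarrow> prob_space M \<and> T \<in> measurable M M \<and>
     (\<forall>A\<in>sets M. measure M (T -` A \<inter> space M) = measure M A)"

definition ergodic :: "'a measure \<Rightarrow> ('a \<Rightarrow> 'a) \<Rightarrow> bool" where
  "ergodic M T \<longleftrightarrow> (\<forall>A\<in>sets M. T -` A \<inter> space M = A \<longrightarrow> measure M A = 0 \<or> measure M A = 1)"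

definition mixing :: "'a measure \<Rightarrow> ('a \<Rightarrow> 'a) \<Rightarrow> bool" where
  "mixing M T \<longleftrightarrow> (\<forall>A\<in>sets M. \<forall>B\<in>sets M.
     (\<lambda>n. measure M (A \<inter> preimg_iter M T n B)) \<longlonglongrightarrow> measure M A * measure M B)"

definition weakly_mixing :: "'a measure \<Rightarrow> ('a \<Rightarrow> 'a) \<Rightarrow> bool" where
  "weakly_mixing M T \<longleftrightarrow> (\<forall>A\<in>sets M. \<forall>B\<in>sets M.
     (\<lambda>N. (\<Sum>n<N. \<bar>measure M (A \<inter> preimg_iter M T n B) - measure M A * measure M B\<bar>) / real N)
       \<longlonglongrightarrow> 0)"

definition zero_density :: "nat set \<Rightarrow> bool" where
  "zero_density S \<longleftrightarrow> (\<lambda>n. real (card (S \<inter> {..<n})) / real n) \<longlonglongrightarrow> 0"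

definition ratio_seq :: "'a measure \<Rightarrow> ('a \<Rightarrow> 'a) \<Rightarrow> 'a set \<Rightarrow> 'a set \<Rightarrow> nat \<Rightarrow> ereal" where
  "ratio_seq M T A B n = ereal (measure M (A \<inter> preimg_iter M T n B) / measure M B)"

end

theory Submission
  imports Defs
begin

locale mpsl = prob_space M for M :: "'a measure" +
  fixes T :: "'a \<Rightarrow> 'a"
  assumes Tmeas: "T \<in> measurable M M"
  and Tpres: "\<And>A. A \<in> sets M \<Longrightarrow> measure M (T -` A \<inter> space M) = measure M A"
begin

lemma Tn_meas: "(T ^^ n) \<in> measurable M M"
  by (induction n) (auto intro: measurable_compose[OF _ Tmeas])

lemma Tn_space: "x \<in> space M \<Longrightarrow> (T ^^ n) x \<in> space M"
  by (rule measurable_space[OF Tn_meas])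

lemma T_space: "x \<in> space M \<Longrightarrow> T x \<in> space M"
  by (rule measurable_space[OF Tmeas])

lemma pre_sets[measurable]: "B \<in> sets M \<Longrightarrow> preimg_iter M T n B \<in> sets M"
  unfolding preimg_iter_def by (rule measurable_sets[OF Tn_meas])

lemma pre_Suc: "preimg_iter M T (Suc n) B = preimg_iter M T n (T -` B \<inter> space M)"
  unfolding preimg_iter_def using Tn_space by (auto simp: funpow_Suc_right)

lemma pre_measure: "B \<in> sets M \<Longrightarrow> measure M (preimg_iter M T n B) = measure M B"
proof (induction n arbitrary: B)
  case 0 then show ?case by (simp add: preimg_iter_def Int_absorb2 sets.sets_into_space)
next
  case (Suc n)
  have "T -` B \<inter> space M \<in> sets M" by (rule measurable_sets[OF Tmeas Suc.prems])
  then show ?case using Suc by (simp add: pre_Suc Tpres)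
qed

lemma pre_add: "preimg_iter M T n (preimg_iter M T m B) = preimg_iter M T (n + m) B"
proof -
  have h: "\<And>x. (T^^m)((T^^n) x) = (T^^(n+m)) x" by (metis add.commute comp_apply funpow_add)
  show ?thesis unfolding preimg_iter_def using Tn_space by (auto simp: h)
qed

lemma pre_compl:
  assumes "A \<in> sets M" "B \<in> sets M"
  shows "measure M (A \<inter> preimg_iter M T n B) + measure M ((space M - A) \<inter> preimg_iter M T n B) = measure M B"
proof -
  have "measure M (A \<inter> preimg_iter M T n B) + measure M ((space M - A) \<inter> preimg_iter M T n B)
      = measure M (preimg_iter M T n B)"
  proof -
    have e: "preimg_iter M T n B = (A \<inter> preimg_iter M T n B) \<union> ((space M - A) \<inter> preimg_iter M T n B)"
      by (auto simp: preimg_iter_def)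
    show ?thesis by (subst e, subst measure_Union) (use assms in auto)
  qed
  then show ?thesis using pre_measure assms by simp
qed

end

lemma LS_to_ev:
  assumes "Limsup F (\<lambda>n. ereal (f n)) \<le> ereal c" "\<epsilon> > 0"
  shows "eventually (\<lambda>n. f n < c + \<epsilon>) F"
proof -
  have "Limsup F (\<lambda>n. ereal (f n)) < ereal (c + \<epsilon>)" using assms by (simp add: le_less_trans)
  from Limsup_lessD[OF this] show ?thesis by simp
qed

lemma ev_to_LS:
  assumes "\<And>\<epsilon>. \<epsilon> > 0 \<Longrightarrow> eventually (\<lambda>n. f n < c + \<epsilon>) F"
  shows "Limsup F (\<lambda>n. ereal (f n)) \<le> ereal c"
  unfolding Limsup_le_iff
proof (intro allI impI)
  fix y :: ereal assume y: "y > ereal c"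
  show "eventually (\<lambda>n. y > ereal (f n)) F"
  proof (cases y)
    case (real r)
    with y have "r - c > 0" by simp
    from assms[OF this] show ?thesis by eventually_elim (simp add: real)
  next
    case PInf then show ?thesis by simp
  next
    case MInf then show ?thesis using y by simp
  qed
qed

lemma tendsto_to_LS:
  assumes "(f \<longlongrightarrow> c) F"
  shows "Limsup F (\<lambda>n. ereal (f n)) \<le> ereal c"
proof (rule ev_to_LS)
  fix \<epsilon> :: real assume "\<epsilon> > 0"
  from tendstoD[OF assms this] show "eventually (\<lambda>n. f n < c + \<epsilon>) F"
    by eventually_elim (simp add: dist_real_def abs_less_iff)
qed

lemma two_sided:
  fixes f g :: "'b \<Rightarrow> real"
  assumes "\<And>\<epsilon>. \<epsilon> > 0 \<Longrightarrow> eventually (\<lambda>n. f n < c + \<epsilon>) F"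
    "\<And>\<epsilon>. \<epsilon> > 0 \<Longrightarrow> eventually (\<lambda>n. g n < d + \<epsilon>) F"
    "\<And>n. f n + g n = c + d"
  shows "(f \<longlongrightarrow> c) F"
proof (rule tendstoI)
  fix \<epsilon> :: real assume e: "\<epsilon> > 0"
  show "eventually (\<lambda>n. dist (f n) c < \<epsilon>) F"
    using assms(1)[OF e] assms(2)[OF e]
  proof eventually_elim
    case (elim n) then show ?case using assms(3)[of n] by (simp add: dist_real_def abs_less_iff)
  qed
qed

lemma kvn_back:
  fixes a :: "nat \<Rightarrow> real"
  assumes a: "\<And>n. 0 \<le> a n" "\<And>n. a n \<le> 1" and zd: "zero_density N"
    and lim: "(a \<longlongrightarrow> 0) (sequentially \<sqinter> principal (- N))"
  shows "(\<lambda>m. (\<Sum>n<m. a n) / real m) \<longlonglongrightarrow> 0"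
proof (rule tendstoI)
  fix \<epsilon> :: real assume e: "\<epsilon> > 0"
  have "eventually (\<lambda>n. dist (a n) 0 < \<epsilon>/3) (sequentially \<sqinter> principal (- N))"
    using tendstoD[OF lim, of "\<epsilon>/3"] e by simp
  then obtain K where K0: "\<forall>n\<ge>K. n \<notin> N \<longrightarrow> \<bar>a n\<bar> < \<epsilon>/3"
    unfolding eventually_inf_principal eventually_sequentially by auto
  have K: "\<And>n. n \<ge> K \<Longrightarrow> n \<notin> N \<Longrightarrow> a n < \<epsilon>/3" using K0 a(1) by (metis abs_of_nonneg)
  have "eventually (\<lambda>m. dist (real (card (N \<inter> {..<m})) / real m) 0 < \<epsilon>/3) sequentially"
    using tendstoD[OF zd[unfolded zero_density_def], of "\<epsilon>/3"] e by simp
  then obtain K2 where K2: "\<And>m. m \<ge> K2 \<Longrightarrow> real (card (N \<inter> {..<m})) / real m < \<epsilon>/3"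
    unfolding eventually_sequentially by auto
  obtain K3 :: nat where K3: "real K3 > 3 * real K / \<epsilon>" using reals_Archimedean2 by blast
  show "eventually (\<lambda>m. dist ((\<Sum>n<m. a n) / real m) 0 < \<epsilon>) sequentially"
    unfolding eventually_sequentially
  proof (intro exI[of _ "max (max K2 K3) 1"] allI impI)
    fix m assume m: "max (max K2 K3) 1 \<le> m"
    have mpos: "real m > 0" using m by simp
    have "(\<Sum>n<m. a n) \<le> (\<Sum>n<m. of_bool (n < K) + of_bool (n \<in> N) + \<epsilon>/3)"
    proof (rule sum_mono)
      fix n assume "n \<in> {..<m}"
      show "a n \<le> of_bool (n < K) + of_bool (n \<in> N) + \<epsilon>/3"
        using K[of n] a[of n] e by (cases "n < K"; cases "n \<in> N") auto
    qed
    also have "\<dots> = real (card ({..<m} \<inter> {n. n < K})) + real (card ({..<m} \<inter> N)) + real m * \<epsilon>/3"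
      by (simp add: sum.distrib Int_def)
    also have "real (card ({..<m} \<inter> {n. n < K})) \<le> real K"
    proof -
      have "{..<m} \<inter> {n. n < K} \<subseteq> {..<K}" by auto
      then show ?thesis using card_mono[of "{..<K}"] by fastforce
    qed
    finally have s: "(\<Sum>n<m. a n) \<le> real K + real (card (N \<inter> {..<m})) + real m * \<epsilon>/3"
      by (simp add: Int_commute)
    have c: "real (card (N \<inter> {..<m})) < real m * (\<epsilon>/3)"
      using K2[of m] m mpos by (simp add: divide_less_eq mult.commute)
    have k: "real K < real m * (\<epsilon>/3)"
    proof -
      have "3 * real K / \<epsilon> < real m" using K3 m by linarith
      then show ?thesis using e by (simp add: divide_less_eq mult.commute)
    qed
    have "(\<Sum>n<m. a n) < real m * \<epsilon>" using s c k by linarith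
    moreover have "0 \<le> (\<Sum>n<m. a n)" using a by (simp add: sum_nonneg)
    ultimately show "dist ((\<Sum>n<m. a n) / real m) 0 < \<epsilon>"
      using mpos by (simp add: dist_real_def divide_less_eq mult.commute)
  qed
qed


lemma kvn_fwd:
  fixes a :: "nat \<Rightarrow> real"
  assumes a: "\<And>n. 0 \<le> a n" "\<And>n. a n \<le> 1"
    and ces: "(\<lambda>m. (\<Sum>n<m. a n) / real m) \<longlonglongrightarrow> 0"
  shows "\<exists>N. zero_density N \<and> (a \<longlongrightarrow> 0) (sequentially \<sqinter> principal (- N))"
proof -
  define C where "C m = (\<Sum>n<m. a n) / real m" for m
  have C0: "0 \<le> C m" for m unfolding C_def using a by (simp add: sum_nonneg)
  have C1: "C m \<le> 1" for m
  proof -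
    have "(\<Sum>n<m. a n) \<le> (\<Sum>n<m. 1)" using a by (intro sum_mono) auto
    then show ?thesis unfolding C_def by (cases "m = 0") (auto simp: divide_le_eq)
  qed
  define D where "D m = Sup (C ` {m..})" for m
  have bdd: "bdd_above (C ` S)" for S using C1 by (auto intro!: bdd_aboveI)
  have CD: "C m \<le> D m" for m unfolding D_def by (rule cSUP_upper) (auto intro: bdd)
  have D1: "D m \<le> 1" for m unfolding D_def by (rule cSUP_least) (auto intro: C1)
  have D0: "0 \<le> D m" for m using C0[of m] CD[of m] by linarith
  have Dmono: "D m' \<le> D m" if "m \<le> m'" for m m'
    unfolding D_def using that by (intro cSUP_subset_mono) (auto intro: bdd)
  have Dlim: "D \<longlonglongrightarrow> 0"
  proof (rule tendstoI)
    fix \<epsilon> :: real assume e: "\<epsilon> > 0"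
    then have "eventually (\<lambda>m. dist (C m) 0 < \<epsilon>/2) sequentially"
      using tendstoD[OF ces[folded C_def], of "\<epsilon>/2"] by simp
    then obtain K where K: "\<And>m. m \<ge> K \<Longrightarrow> C m < \<epsilon>/2"
      unfolding eventually_sequentially dist_real_def using C0 by (metis abs_of_nonneg diff_zero)
    show "eventually (\<lambda>m. dist (D m) 0 < \<epsilon>) sequentially"
      unfolding eventually_sequentially
    proof (intro exI[of _ K] allI impI)
      fix m assume "K \<le> m"
      then have "D m \<le> \<epsilon>/2" unfolding D_def using K by (intro cSUP_least) (auto, meson less_imp_le order_trans)
      then show "dist (D m) 0 < \<epsilon>" using D0[of m] e by (simp add: dist_real_def)
    qed
  qed
  define \<delta> where "\<delta> m = sqrt (D m) + 1 / (real m + 1)" for m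
  have dpos: "\<delta> m > 0" for m unfolding \<delta>_def using D0[of m] by (simp add: add_nonneg_pos)
  have dmono: "\<delta> m' \<le> \<delta> m" if "m \<le> m'" for m m'
    unfolding \<delta>_def using Dmono[OF that] that
    by (intro add_mono real_sqrt_le_mono) (auto simp: frac_le)
  have sqD: "(\<lambda>m. sqrt (D m)) \<longlonglongrightarrow> 0" using tendsto_real_sqrt[OF Dlim] by simp
  have dlim: "\<delta> \<longlonglongrightarrow> 0"
  proof -
    have "(\<lambda>m. 1 / (real m + 1)) \<longlonglongrightarrow> 0"
      using LIMSEQ_Suc[OF lim_const_over_n[of 1]] by (simp add: add.commute)
    then show ?thesis unfolding \<delta>_def using tendsto_add[OF sqD] by fastforce
  qed
  define N where "N = {n. \<delta> n \<le> a n}"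
  have card_bd: "real (card (N \<inter> {..<m})) \<le> real m * sqrt (D m)" for m
  proof -
    have "real (card (N \<inter> {..<m})) * \<delta> m = (\<Sum>n\<in>N \<inter> {..<m}. \<delta> m)" by simp
    also have "\<dots> \<le> (\<Sum>n\<in>N \<inter> {..<m}. a n)"
      by (intro sum_mono) (auto simp: N_def, meson dmono less_imp_le order_trans)
    also have "\<dots> \<le> (\<Sum>n<m. a n)" using a by (intro sum_mono2) auto
    also have "\<dots> = real m * C m" unfolding C_def by (cases "m = 0") auto
    also have "\<dots> \<le> real m * (sqrt (D m) * \<delta> m)"
    proof (intro mult_left_mono)
      have "C m \<le> sqrt (D m) * sqrt (D m)" using CD[of m] D0[of m] by simp
      also have "\<dots> \<le> sqrt (D m) * \<delta> m" unfolding \<delta>_def using D0[of m] by (intro mult_left_mono) auto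
      finally show "C m \<le> sqrt (D m) * \<delta> m" .
    qed auto
    finally show ?thesis using dpos[of m] by (simp add: mult.assoc)
  qed
  have zd: "zero_density N"
    unfolding zero_density_def
  proof (rule tendsto_sandwich[OF _ _ tendsto_const sqD])
    show "eventually (\<lambda>m. 0 \<le> real (card (N \<inter> {..<m})) / real m) sequentially" by simp
    show "eventually (\<lambda>m. real (card (N \<inter> {..<m})) / real m \<le> sqrt (D m)) sequentially"
    proof (intro always_eventually allI)
      fix m show "real (card (N \<inter> {..<m})) / real m \<le> sqrt (D m)"
        using card_bd[of m] D0[of m] by (cases "m = 0") (auto simp: divide_le_eq mult.commute)
    qed
  qed
  have "(a \<longlongrightarrow> 0) (sequentially \<sqinter> principal (- N))"
  proof (rule tendstoI)
    fix \<epsilon> :: real assume e: "\<epsilon> > 0"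
    have "eventually (\<lambda>n. dist (\<delta> n) 0 < \<epsilon>) sequentially" using tendstoD[OF dlim e] .
    then show "eventually (\<lambda>n. dist (a n) 0 < \<epsilon>) (sequentially \<sqinter> principal (- N))"
      unfolding eventually_inf_principal
      by eventually_elim (use a in \<open>auto simp: N_def dist_real_def\<close>)
  qed
  with zd show ?thesis by blast
qed


context mpsl begin

definition P where "P A B n = measure M (A \<inter> preimg_iter M T n B)"
definition rr where "rr A B n = P A B n / measure M B"

lemma ratio_rr: "ratio_seq M T A B n = ereal (rr A B n)"
  unfolding ratio_seq_def rr_def P_def by simp

lemma P_le: "B \<in> sets M \<Longrightarrow> P A B n \<le> measure M B"
  unfolding P_def using pre_measure[of B n] by (metis finite_measure_mono inf_le2 pre_sets)

lemma P_nonneg: "0 \<le> P A B n" unfolding P_def by simp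

lemma P_compl: "A \<in> sets M \<Longrightarrow> B \<in> sets M \<Longrightarrow> P A B n + P (space M - A) B n = measure M B"
  unfolding P_def using pre_compl by simp

lemma rr_compl: "A \<in> sets M \<Longrightarrow> B \<in> sets M \<Longrightarrow> measure M B > 0 \<Longrightarrow>
   rr A B n + rr (space M - A) B n = measure M A + measure M (space M - A)"
  unfolding rr_def using P_compl[of A B n] prob_compl[of A]
  by (simp add: add_divide_distrib[symmetric])

lemma core:
  assumes A: "A \<in> sets M" and B: "B \<in> sets M" "measure M B > 0"
    and h1: "Limsup F (ratio_seq M T A B) \<le> ereal (measure M A)"
    and h2: "Limsup F (ratio_seq M T (space M - A) B) \<le> ereal (measure M (space M - A))"
  shows "(P A B \<longlongrightarrow> measure M A * measure M B) F"
proof -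
  have "(rr A B \<longlongrightarrow> measure M A) F"
  proof (rule two_sided)
    show "eventually (\<lambda>n. rr A B n < measure M A + \<epsilon>) F" if "\<epsilon> > 0" for \<epsilon>
      using LS_to_ev[OF h1[unfolded ratio_rr] that] .
    show "eventually (\<lambda>n. rr (space M - A) B n < measure M (space M - A) + \<epsilon>) F" if "\<epsilon> > 0" for \<epsilon>
      using LS_to_ev[OF h2[unfolded ratio_rr] that] .
    show "rr A B n + rr (space M - A) B n = measure M A + measure M (space M - A)" for n
      using rr_compl A B by simp
  qed
  then have "((\<lambda>n. rr A B n * measure M B) \<longlongrightarrow> measure M A * measure M B) F"
    by (intro tendsto_intros)
  then show ?thesis using B by (simp add: rr_def)
qed

lemma P_null: "B \<in> sets M \<Longrightarrow> \<not> measure M B > 0 \<Longrightarrow> P A B n = 0"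
  using P_le[of B A n] P_nonneg[of A B n] by simp

lemma part1:
  "mixing M T \<longleftrightarrow> (\<forall>A\<in>sets M. \<forall>B\<in>sets M. measure M B > 0 \<longrightarrow>
              limsup (ratio_seq M T A B) \<le> ereal (measure M A))"
proof
  assume mix: "mixing M T"
  show "\<forall>A\<in>sets M. \<forall>B\<in>sets M. measure M B > 0 \<longrightarrow> limsup (ratio_seq M T A B) \<le> ereal (measure M A)"
  proof (intro ballI impI)
    fix A B assume A: "A \<in> sets M" and B: "B \<in> sets M" and pos: "measure M B > 0"
    have "(P A B \<longlongrightarrow> measure M A * measure M B) sequentially"
      using mix A B unfolding mixing_def P_def[abs_def] by auto
    then have "(rr A B \<longlongrightarrow> measure M A * measure M B / measure M B) sequentially"
      unfolding rr_def[abs_def] using pos by (intro tendsto_intros) auto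
    then have "(rr A B \<longlongrightarrow> measure M A) sequentially" using pos by simp
    from tendsto_to_LS[OF this] show "limsup (ratio_seq M T A B) \<le> ereal (measure M A)"
      unfolding ratio_rr by simp
  qed
next
  assume h: "\<forall>A\<in>sets M. \<forall>B\<in>sets M. measure M B > 0 \<longrightarrow> limsup (ratio_seq M T A B) \<le> ereal (measure M A)"
  show "mixing M T" unfolding mixing_def
  proof (intro ballI)
    fix A B assume A: "A \<in> sets M" and B: "B \<in> sets M"
    show "(\<lambda>n. measure M (A \<inter> preimg_iter M T n B)) \<longlonglongrightarrow> measure M A * measure M B"
    proof (cases "measure M B > 0")
      case True
      have "space M - A \<in> sets M" using A by auto
      with core[OF A B True] h A B True show ?thesis unfolding P_def[abs_def] by blast
    next
      case False
      then show ?thesis using P_null[OF B False] unfolding P_def[abs_def]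
        using B measure_nonneg[of M B] by (simp add: not_less)
    qed
  qed
qed

end

context mpsl begin

lemma zd_union: "zero_density N1 \<Longrightarrow> zero_density N2 \<Longrightarrow> zero_density (N1 \<union> N2)"
  unfolding zero_density_def
proof (rule tendsto_sandwich[OF _ _ tendsto_const])
  assume z1: "(\<lambda>n. real (card (N1 \<inter> {..<n})) / real n) \<longlonglongrightarrow> 0"
    and z2: "(\<lambda>n. real (card (N2 \<inter> {..<n})) / real n) \<longlonglongrightarrow> 0"
  show "eventually (\<lambda>n. 0 \<le> real (card ((N1 \<union> N2) \<inter> {..<n})) / real n) sequentially" by simp
  show "eventually (\<lambda>n. real (card ((N1 \<union> N2) \<inter> {..<n})) / real n
        \<le> real (card (N1 \<inter> {..<n})) / real n + real (card (N2 \<inter> {..<n})) / real n) sequentially"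
  proof (intro always_eventually allI)
    fix n
    have "card ((N1 \<union> N2) \<inter> {..<n}) \<le> card (N1 \<inter> {..<n}) + card (N2 \<inter> {..<n})"
      by (metis Int_Un_distrib2 card_Un_le)
    then show "real (card ((N1 \<union> N2) \<inter> {..<n})) / real n
        \<le> real (card (N1 \<inter> {..<n})) / real n + real (card (N2 \<inter> {..<n})) / real n"
      by (simp add: add_divide_distrib[symmetric] divide_right_mono)
  qed
  show "(\<lambda>n. real (card (N1 \<inter> {..<n})) / real n + real (card (N2 \<inter> {..<n})) / real n) \<longlonglongrightarrow> 0"
    using tendsto_add[OF z1 z2] by simp
qed

lemma Limsup_sub:
  fixes f :: "nat \<Rightarrow> ereal"
  assumes "Limsup (sequentially \<sqinter> principal (- N1)) f \<le> c"
  shows "Limsup (sequentially \<sqinter> principal (- (N1 \<union> N2))) f \<le> c"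
proof -
  have "sequentially \<sqinter> principal (- (N1 \<union> N2)) \<le> sequentially \<sqinter> principal (- N1)"
    by (intro inf_mono) auto
  then show ?thesis using assms unfolding Limsup_le_iff by (meson filter_leD)
qed

lemma part2:
  "weakly_mixing M T \<longleftrightarrow> (\<forall>A\<in>sets M. \<forall>B\<in>sets M. measure M B > 0 \<longrightarrow>
     (\<exists>N::nat set. zero_density N \<and>
       Limsup (sequentially \<sqinter> principal (- N)) (ratio_seq M T A B) \<le> ereal (measure M A)))"
proof
  assume wm: "weakly_mixing M T"
  show "\<forall>A\<in>sets M. \<forall>B\<in>sets M. measure M B > 0 \<longrightarrow> (\<exists>N::nat set. zero_density N \<and>
       Limsup (sequentially \<sqinter> principal (- N)) (ratio_seq M T A B) \<le> ereal (measure M A))"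
  proof (intro ballI impI)
    fix A B assume A: "A \<in> sets M" and B: "B \<in> sets M" and pos: "measure M B > 0"
    define a where "a n = \<bar>P A B n - measure M A * measure M B\<bar>" for n
    have a0: "0 \<le> a n" for n unfolding a_def by simp
    have a1: "a n \<le> 1" for n
    proof -
      have "P A B n \<le> 1" using P_le[OF B, of A n] by (meson order.trans prob_le_1)
      moreover have "measure M A * measure M B \<le> 1" by (simp add: mult_le_one)
      moreover have "0 \<le> measure M A * measure M B" by simp
      ultimately show ?thesis unfolding a_def abs_le_iff using P_nonneg[of A B n] by linarith
    qed
    have "(\<lambda>m. (\<Sum>n<m. a n) / real m) \<longlonglongrightarrow> 0"
      using wm A B unfolding weakly_mixing_def a_def P_def by auto
    from kvn_fwd[OF a0 a1 this] obtain N where N: "zero_density N"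
      and lim: "(a \<longlongrightarrow> 0) (sequentially \<sqinter> principal (- N))" by blast
    have "((\<lambda>n. P A B n - measure M A * measure M B) \<longlongrightarrow> 0) (sequentially \<sqinter> principal (- N))"
      using lim unfolding a_def by (simp add: tendsto_rabs_zero_iff)
    then have "((\<lambda>n. (P A B n - measure M A * measure M B) / measure M B + measure M A)
        \<longlongrightarrow> 0 / measure M B + measure M A) (sequentially \<sqinter> principal (- N))"
      using pos by (intro tendsto_intros) auto
    moreover have "(\<lambda>n. (P A B n - measure M A * measure M B) / measure M B + measure M A) = rr A B"
      using pos by (auto simp: rr_def field_simps)
    ultimately have "(rr A B \<longlongrightarrow> measure M A) (sequentially \<sqinter> principal (- N))" by simp
    from tendsto_to_LS[OF this] N show "\<exists>N::nat set. zero_density N \<and>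
       Limsup (sequentially \<sqinter> principal (- N)) (ratio_seq M T A B) \<le> ereal (measure M A)"
      unfolding ratio_rr by blast
  qed
next
  assume h: "\<forall>A\<in>sets M. \<forall>B\<in>sets M. measure M B > 0 \<longrightarrow> (\<exists>N::nat set. zero_density N \<and>
       Limsup (sequentially \<sqinter> principal (- N)) (ratio_seq M T A B) \<le> ereal (measure M A))"
  show "weakly_mixing M T" unfolding weakly_mixing_def
  proof (intro ballI)
    fix A B assume A: "A \<in> sets M" and B: "B \<in> sets M"
    define a where "a n = \<bar>P A B n - measure M A * measure M B\<bar>" for n
    have a0: "0 \<le> a n" for n unfolding a_def by simp
    have a1: "a n \<le> 1" for n
    proof -
      have "P A B n \<le> 1" using P_le[OF B, of A n] by (meson order.trans prob_le_1)
      moreover have "measure M A * measure M B \<le> 1" by (simp add: mult_le_one)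
      moreover have "0 \<le> measure M A * measure M B" by simp
      ultimately show ?thesis unfolding a_def abs_le_iff using P_nonneg[of A B n] by linarith
    qed
    have "(\<lambda>m. (\<Sum>n<m. a n) / real m) \<longlonglongrightarrow> 0"
    proof (cases "measure M B > 0")
      case True
      have Ac: "space M - A \<in> sets M" using A by auto
      obtain N1 where N1: "zero_density N1"
        "Limsup (sequentially \<sqinter> principal (- N1)) (ratio_seq M T A B) \<le> ereal (measure M A)"
        using h A B True by blast
      obtain N2 where N2: "zero_density N2"
        "Limsup (sequentially \<sqinter> principal (- N2)) (ratio_seq M T (space M - A) B) \<le> ereal (measure M (space M - A))"
        using h Ac B True by blast
      have "(P A B \<longlongrightarrow> measure M A * measure M B) (sequentially \<sqinter> principal (- (N1 \<union> N2)))"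
      proof -
        have L2: "Limsup (sequentially \<sqinter> principal (- (N1 \<union> N2))) (ratio_seq M T (space M - A) B)
            \<le> ereal (measure M (space M - A))"
          using Limsup_sub[OF N2(2), of N1] by (simp only: Un_commute)
        show ?thesis by (rule core[OF A B True Limsup_sub[OF N1(2), of N2] L2])
      qed
      then have "((\<lambda>n. P A B n - measure M A * measure M B) \<longlongrightarrow> 0) (sequentially \<sqinter> principal (- (N1 \<union> N2)))"
        by (simp add: LIM_zero)
      then have "(a \<longlongrightarrow> 0) (sequentially \<sqinter> principal (- (N1 \<union> N2)))"
        unfolding a_def by (simp add: tendsto_rabs_zero_iff)
      from kvn_back[OF a0 a1 zd_union[OF N1(1) N2(1)] this] show ?thesis .
    next
      case False
      then have "a n = 0" for n using P_null[OF B False] B measure_nonneg[of M B]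
        unfolding a_def by (simp add: not_less)
      then show ?thesis by simp
    qed
    then show "(\<lambda>N. (\<Sum>n<N. \<bar>measure M (A \<inter> preimg_iter M T n B) - measure M A * measure M B\<bar>) / real N)
       \<longlonglongrightarrow> 0" unfolding a_def P_def .
  qed
qed

end

context mpsl begin

lemma pre_invariant:
  assumes "T -` A \<inter> space M = A"
  shows "preimg_iter M T n A = A"
proof (induction n)
  case 0 then show ?case using assms by (auto simp: preimg_iter_def)
next
  case (Suc n) then show ?case using assms by (simp add: pre_Suc)
qed

lemma part3a:
  assumes h: "\<forall>A\<in>sets M. \<forall>B\<in>sets M. measure M B > 0 \<longrightarrow>
              (\<exists>N::nat set. infinite (- N) \<and>
                 Limsup (sequentially \<sqinter> principal (- N)) (ratio_seq M T A B) \<le> ereal (measure M A))"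
  shows "ergodic M T"
  unfolding ergodic_def
proof (intro ballI impI)
  fix A assume A: "A \<in> sets M" and inv: "T -` A \<inter> space M = A"
  show "measure M A = 0 \<or> measure M A = 1"
  proof (rule ccontr)
    assume nn: "\<not> (measure M A = 0 \<or> measure M A = 1)"
    have m0: "0 \<le> measure M A" and m1: "measure M A \<le> 1" by simp_all
    have pos: "measure M A > 0" using nn m0 by linarith
    have lt: "measure M A < 1" using nn m1 by linarith
    obtain N where N: "infinite (- N)"
      and L: "Limsup (sequentially \<sqinter> principal (- N)) (ratio_seq M T A A) \<le> ereal (measure M A)"
      using h A pos by blast
    have r1: "ratio_seq M T A A = (\<lambda>n. 1)"
      using pos by (auto simp: ratio_seq_def pre_invariant[OF inv] one_ereal_def)
    have nb: "sequentially \<sqinter> principal (- N) \<noteq> bot"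
    proof
      assume "sequentially \<sqinter> principal (- N) = bot"
      then have "eventually (\<lambda>n. False) (sequentially \<sqinter> principal (- N))" by simp
      then obtain K where K: "\<And>n. n \<ge> K \<Longrightarrow> n \<in> - N \<Longrightarrow> False"
        unfolding eventually_inf_principal eventually_sequentially by auto
      then have "- N \<subseteq> {..<K}" by (auto simp: not_le[symmetric])
      then show False using N finite_subset by blast
    qed
    have "Limsup (sequentially \<sqinter> principal (- N)) (\<lambda>n. 1 :: ereal) = 1"
      using Limsup_const[OF nb] .
    with L r1 lt show False by simp
  qed
qed

lemma part3b:
  assumes h: "\<forall>A\<in>sets M. \<forall>B\<in>sets M. measure M B > 0 \<longrightarrow>
              liminf (ratio_seq M T A B) \<le> ereal (measure M A)"
  shows "\<forall>A\<in>sets M. \<forall>B\<in>sets M. measure M B > 0 \<longrightarrow>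
              (\<exists>N::nat set. infinite (- N) \<and>
                 Limsup (sequentially \<sqinter> principal (- N)) (ratio_seq M T A B) \<le> ereal (measure M A))"
proof (intro ballI impI)
  fix A B assume A: "A \<in> sets M" and B: "B \<in> sets M" and pos: "measure M B > 0"
  let ?r = "ratio_seq M T A B"
  obtain \<sigma> :: "nat \<Rightarrow> nat" where sm: "strict_mono \<sigma>" and lim: "(?r \<circ> \<sigma>) \<longlonglongrightarrow> liminf ?r"
    using liminf_subseq_lim by blast
  have inf: "infinite (- (- range \<sigma>))"
    using range_inj_infinite[OF strict_mono_imp_inj_on[OF sm]] by simp
  have "Limsup (sequentially \<sqinter> principal (- (- range \<sigma>))) ?r \<le> liminf ?r"
    unfolding Limsup_le_iff
  proof (intro allI impI)
    fix y assume y: "y > liminf ?r"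
    from order_tendstoD(2)[OF lim y] obtain K where K: "\<And>k. k \<ge> K \<Longrightarrow> ?r (\<sigma> k) < y"
      unfolding eventually_sequentially by auto
    show "eventually (\<lambda>n. y > ?r n) (sequentially \<sqinter> principal (- (- range \<sigma>)))"
      unfolding eventually_inf_principal eventually_sequentially
    proof (intro exI[of _ "\<sigma> K"] allI impI)
      fix n assume "\<sigma> K \<le> n" "n \<in> - (- range \<sigma>)"
      then obtain k where k: "n = \<sigma> k" "\<sigma> K \<le> \<sigma> k" by auto
      then have "K \<le> k" using strict_mono_less_eq[OF sm] by simp
      then show "y > ?r n" using K k by simp
    qed
  qed
  also have "\<dots> \<le> ereal (measure M A)" using h A B pos by blast
  finally show "\<exists>N::nat set. infinite (- N) \<and>
                 Limsup (sequentially \<sqinter> principal (- N)) (ratio_seq M T A B) \<le> ereal (measure M A)"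
    using inf by blast
qed

lemma inv_ge_integral:
  fixes f :: "'a \<Rightarrow> real"
  assumes erg: "ergodic M T" and fm: "f \<in> borel_measurable M"
    and fb: "\<And>x. \<bar>f x\<bar> \<le> 1" and finv: "\<And>x. x \<in> space M \<Longrightarrow> f (T x) = f x"
  shows "AE x in M. integral\<^sup>L M f \<le> f x"
proof -
  let ?g = "integral\<^sup>L M f"
  have intf: "integrable M f" using fb fm by (intro integrable_const_bound[of _ 1]) auto
  define L where "L t = {x \<in> space M. f x < t}" for t
  have Ls: "L t \<in> sets M" for t unfolding L_def using fm by (simp add: borel_measurable_iff_less)
  have Linv: "T -` L t \<inter> space M = L t" for t
    unfolding L_def using finv T_space by auto
  have L01: "measure M (L t) = 0 \<or> measure M (L t) = 1" for t
    using erg[unfolded ergodic_def, rule_format, OF Ls Linv] .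
  have L0: "measure M (L (?g - 1 / (real n + 1))) = 0" for n
  proof (rule ccontr)
    let ?d = "1 / (real n + 1)"
    assume "measure M (L (?g - ?d)) \<noteq> 0"
    then have "measure M (L (?g - ?d)) = 1" using L01 by blast
    then have "measure M (space M - L (?g - ?d)) = 0" using prob_compl[OF Ls] by simp
    then have "AE x in M. x \<notin> space M - L (?g - ?d)"
      using Ls by (intro AE_not_in) (auto simp: emeasure_eq_measure)
    from this AE_space have ae: "AE x in M. f x \<le> ?g - ?d"
      by eventually_elim (auto simp: L_def)
    have "?g \<le> integral\<^sup>L M (\<lambda>x. ?g - ?d)"
      using ae intf by (intro integral_mono_AE) auto
    also have "\<dots> = ?g - ?d" by (simp add: prob_space)
    finally show False by (simp add: add_pos_nonneg)
  qed
  have "{x \<in> space M. \<not> ?g \<le> f x} = (\<Union>n. L (?g - 1 / (real n + 1)))"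
  proof (intro set_eqI iffI)
    fix x assume x: "x \<in> {x \<in> space M. \<not> ?g \<le> f x}"
    then have "?g - f x > 0" by auto
    from reals_Archimedean[OF this] obtain n where "inverse (real (Suc n)) < ?g - f x" ..
    then have "1 / (real n + 1) < ?g - f x" by (simp add: inverse_eq_divide add.commute)
    with x show "x \<in> (\<Union>n. L (?g - 1 / (real n + 1)))" unfolding L_def by (intro UN_I[of n]) auto
  next
    fix x assume "x \<in> (\<Union>n. L (?g - 1 / (real n + 1)))"
    then obtain n where "x \<in> space M" "f x < ?g - 1 / (real n + 1)" by (auto simp: L_def)
    moreover have "0 < 1 / (real n + 1)" by simp
    ultimately have "x \<in> space M" "f x < ?g" by linarith+
    then show "x \<in> {x \<in> space M. \<not> ?g \<le> f x}" by auto
  qed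
  moreover have "(\<Union>n. L (?g - 1 / (real n + 1))) \<in> null_sets M"
    using L0 Ls by (intro null_sets_UN) (auto simp: null_sets_def emeasure_eq_measure)
  ultimately show ?thesis by (intro AE_I'[of "\<Union>n. L (?g - 1 / (real n + 1))"]) auto
qed

lemma inv_const:
  fixes f :: "'a \<Rightarrow> real"
  assumes erg: "ergodic M T" and fm: "f \<in> borel_measurable M"
    and fb: "\<And>x. \<bar>f x\<bar> \<le> 1" and finv: "\<And>x. x \<in> space M \<Longrightarrow> f (T x) = f x"
  shows "AE x in M. f x = integral\<^sup>L M f"
proof -
  have 1: "AE x in M. integral\<^sup>L M f \<le> f x" using inv_ge_integral assms by blast
  have "AE x in M. integral\<^sup>L M (\<lambda>x. - f x) \<le> - f x"
    using inv_ge_integral[OF erg, of "\<lambda>x. - f x"] fm fb finv by auto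
  then have 2: "AE x in M. f x \<le> integral\<^sup>L M f" by simp
  from 1 2 show ?thesis by eventually_elim simp
qed

end

lemma sum_split_nat:
  "(\<Sum>k < j + d. f k) = (\<Sum>k<j. f k) + (\<Sum>k<d. f (j + k :: nat)) " for f :: "nat \<Rightarrow> real"
  by (induction d) (simp_all add: add.assoc)

context mpsl begin

definition savg :: "'a set \<Rightarrow> nat \<Rightarrow> 'a \<Rightarrow> real" where
  "savg B n x = (\<Sum>k<n. indicator B ((T^^k) x)) / real n"

definition gl :: "'a set \<Rightarrow> 'a \<Rightarrow> ereal" where
  "gl B x = liminf (\<lambda>n. ereal (savg B n x))"

definition G :: "'a set \<Rightarrow> 'a \<Rightarrow> real" where
  "G B x = real_of_ereal (gl B x)"

lemma ind_meas: "B \<in> sets M \<Longrightarrow> (\<lambda>x. indicator B ((T^^k) x) :: real) \<in> borel_measurable M"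
  using measurable_compose[OF Tn_meas borel_measurable_indicator] by blast

lemma savg_meas: "B \<in> sets M \<Longrightarrow> savg B n \<in> borel_measurable M"
  unfolding savg_def[abs_def]
  by (intro borel_measurable_divide borel_measurable_sum ind_meas borel_measurable_const)

lemma ind_sum_le: "(\<Sum>k<n. indicator B ((T^^k) x) :: real) \<le> real n"
proof -
  have "(\<Sum>k<n. indicator B ((T^^k) x) :: real) \<le> (\<Sum>k<n. 1)"
    by (intro sum_mono) (auto simp: indicator_def)
  then show ?thesis by simp
qed

lemma savg_nonneg: "0 \<le> savg B n x"
  unfolding savg_def by (simp add: sum_nonneg)

lemma savg_le1: "savg B n x \<le> 1"
  unfolding savg_def using ind_sum_le[where n=n and B=B and x=x] by (cases "n = 0") (auto simp: divide_le_eq)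

lemma gl_nonneg: "0 \<le> gl B x"
  unfolding gl_def by (rule Liminf_bounded) (simp add: savg_nonneg)

lemma gl_le1: "gl B x \<le> 1"
  unfolding gl_def by (rule Liminf_le) (auto simp: savg_le1)

lemma gl_ereal: "gl B x = ereal (G B x)"
  unfolding G_def using gl_nonneg[of B x] gl_le1[of B x]
  by (cases "gl B x") auto

lemma G_nonneg: "0 \<le> G B x" using gl_nonneg[of B x] gl_ereal[of B x] by simp
lemma G_le1: "G B x \<le> 1" using gl_le1[of B x] gl_ereal[of B x] by simp

lemma G_meas: "B \<in> sets M \<Longrightarrow> G B \<in> borel_measurable M"
  unfolding G_def[abs_def] gl_def
  by (intro borel_measurable_real_of_ereal borel_measurable_liminf borel_measurable_ereal savg_meas)

lemma savg_shift:
  "savg B n (T x) = savg B n x + (indicator B ((T^^n) x) - indicator B x) / real n"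
proof -
  let ?f = "\<lambda>k. indicator B ((T^^k) x) :: real"
  have "(\<Sum>k<n. indicator B ((T^^k) (T x)) :: real) = (\<Sum>k<n. ?f (Suc k))"
    by (intro sum.cong) (simp_all add: funpow_swap1)
  also have "\<dots> = (\<Sum>k<n. ?f k) + ?f n - ?f 0"
    using sum.lessThan_Suc_shift[of ?f n] sum.lessThan_Suc[of ?f n] by simp
  finally show ?thesis unfolding savg_def
    by (simp add: add_divide_distrib diff_divide_distrib)
qed

lemma gl_inv: "gl B (T x) = gl B x"
proof -
  define u where "u n = ereal ((indicator B ((T^^n) x) - indicator B x) / real n)" for n
  have "(\<lambda>n. (indicator B ((T^^n) x) - indicator B x) / real n :: real) \<longlonglongrightarrow> 0"
  proof (rule Lim_null_comparison[OF _ lim_const_over_n[of 1]])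
    show "eventually (\<lambda>n. norm ((indicator B ((T^^n) x) - indicator B x) / real n :: real) \<le> 1 / real n) sequentially"
      by (intro always_eventually allI) (auto simp: indicator_def divide_le_eq)
  qed
  then have u0: "u \<longlonglongrightarrow> 0" unfolding u_def zero_ereal_def by simp
  have "(\<lambda>n. ereal (savg B n (T x))) = (\<lambda>n. u n + ereal (savg B n x))"
    by (auto simp: savg_shift u_def add.commute)
  then have "gl B (T x) = liminf (\<lambda>n. u n + ereal (savg B n x))" unfolding gl_def by simp
  also have "\<dots> = 0 + gl B x" unfolding gl_def by (rule ereal_liminf_lim_add[OF u0]) simp
  finally show ?thesis by simp
qed

lemma G_inv: "G B (T x) = G B x" unfolding G_def by (simp add: gl_inv)

lemma G_iter: "G B ((T^^k) x) = G B x"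
  by (induction k) (simp_all add: G_inv)

end

context mpsl begin

lemma KW:
  assumes B: "B \<in> sets M"
  shows "measure M B \<le> integral\<^sup>L M (G B)"
proof (rule field_le_epsilon)
  fix e :: real assume e: "0 < e"
  define \<epsilon> where "\<epsilon> = min e 1 / 4"
  have \<epsilon>: "0 < \<epsilon>" "\<epsilon> \<le> 1/4" "4 * \<epsilon> \<le> e" using e by (auto simp: \<epsilon>_def)
  let ?I = "integral\<^sup>L M (G B)"
  have Gm: "G B \<in> borel_measurable M" using G_meas[OF B] .
  have Gint: "integrable M (G B)"
    using Gm G_nonneg G_le1 by (intro integrable_const_bound[of _ 1]) auto
  have I1: "?I \<le> 1"
  proof -
    have "?I \<le> integral\<^sup>L M (\<lambda>x. 1)" using Gint G_le1 by (intro integral_mono) auto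
    then show ?thesis by (simp add: prob_space)
  qed
  have ex: "\<exists>n. 1 \<le> n \<and> savg B n x < G B x + \<epsilon>" for x
  proof (rule ccontr)
    assume "\<not> ?thesis"
    then have "\<forall>n\<ge>1. G B x + \<epsilon> \<le> savg B n x" by (auto simp: not_less)
    then have "eventually (\<lambda>n. ereal (G B x + \<epsilon>) \<le> ereal (savg B n x)) sequentially"
      unfolding eventually_sequentially by auto
    then have "ereal (G B x + \<epsilon>) \<le> gl B x" unfolding gl_def by (rule Liminf_bounded)
    then show False using gl_ereal[of B x] \<epsilon> by simp
  qed
  define \<tau> where "\<tau> x = (LEAST n. 1 \<le> n \<and> savg B n x < G B x + \<epsilon>)" for x
  have \<tau>P: "1 \<le> \<tau> x \<and> savg B (\<tau> x) x < G B x + \<epsilon>" for x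
    unfolding \<tau>_def by (rule LeastI_ex[OF ex])
  have \<tau>le: "\<tau> x \<le> n" if "1 \<le> n" "savg B n x < G B x + \<epsilon>" for x n
    unfolding \<tau>_def by (rule Least_le) (use that in auto)
  define Bad where "Bad L = {x \<in> space M. \<forall>n\<in>{1..L}. G B x + \<epsilon> \<le> savg B n x}" for L
  have Bad_iff: "x \<in> Bad L \<longleftrightarrow> L < \<tau> x" if x: "x \<in> space M" for x L
  proof
    assume "x \<in> Bad L"
    then have h: "\<forall>n\<in>{1..L}. G B x + \<epsilon> \<le> savg B n x" by (auto simp: Bad_def)
    show "L < \<tau> x"
    proof (rule ccontr)
      assume "\<not> L < \<tau> x"
      then have "\<tau> x \<in> {1..L}" using \<tau>P[of x] by auto
      with h \<tau>P[of x] show False by fastforce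
    qed
  next
    assume L: "L < \<tau> x"
    have "G B x + \<epsilon> \<le> savg B n x" if "n \<in> {1..L}" for n
    proof (rule ccontr)
      assume "\<not> G B x + \<epsilon> \<le> savg B n x"
      then have "\<tau> x \<le> n" using that by (intro \<tau>le) auto
      then show False using that L by auto
    qed
    then show "x \<in> Bad L" using x by (auto simp: Bad_def)
  qed
  have Bad_eq: "Bad L = space M \<inter> (\<Inter>n\<in>{1..L}. {x \<in> space M. G B x + \<epsilon> \<le> savg B n x})" for L
    by (auto simp: Bad_def)
  have Bad_sets: "Bad L \<in> sets M" for L
  proof (cases "L = 0")
    case True
    then show ?thesis by (simp add: Bad_def)
  next
    case False
    have "(\<Inter>n\<in>{1..L}. {x \<in> space M. G B x + \<epsilon> \<le> savg B n x}) \<in> sets M"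
      using False Gm savg_meas[OF B]
      by (intro sets.finite_INT) (auto intro!: borel_measurable_le borel_measurable_add)
    then show ?thesis unfolding Bad_eq by auto
  qed
  have Bad_dec: "decseq Bad"
    by (rule decseq_SucI) (auto simp: Bad_def)
  have Bad_Inter: "(\<Inter>L. Bad L) = {}"
  proof safe
    fix x assume "x \<in> (\<Inter>L. Bad L)"
    then have "x \<in> Bad (\<tau> x)" "x \<in> space M" by (auto simp: Bad_def)
    then show "x \<in> {}" using Bad_iff by blast
  qed
  have "(\<lambda>L. measure M (Bad L)) \<longlonglongrightarrow> measure M (\<Inter>L. Bad L)"
    using Bad_sets Bad_dec by (intro Lim_measure_decseq) auto
  then have "(\<lambda>L. measure M (Bad L)) \<longlonglongrightarrow> 0" using Bad_Inter by simp
  from order_tendstoD(2)[OF this \<epsilon>(1)] obtain L0 where L0: "\<And>L. L \<ge> L0 \<Longrightarrow> measure M (Bad L) < \<epsilon>"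
    unfolding eventually_sequentially by auto
  define L where "L = max L0 1"
  have L1: "1 \<le> L" and LB: "measure M (Bad L) < \<epsilon>" using L0[of L] by (auto simp: L_def)
  define Gd where "Gd = Bad L"
  have Gds: "Gd \<in> sets M" using Bad_sets by (simp add: Gd_def)
  define a where "a x = (indicator (B - Gd) x :: real)" for x
  define \<tau>' where "\<tau>' x = (if x \<in> Gd then 1 else \<tau> x)" for x
  define c where "c x = G B x + \<epsilon>" for x
  have c_iter: "c ((T^^k) x) = c x" for k x unfolding c_def by (simp add: G_iter)
  have c_pos: "0 < c x" for x unfolding c_def using G_nonneg[of B x] \<epsilon> by simp
  have a01: "0 \<le> a x" "a x \<le> indicator B x" for x unfolding a_def by (auto simp: indicator_def)
  have \<tau>'1: "1 \<le> \<tau>' x" for x unfolding \<tau>'_def using \<tau>P[of x] by auto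
  have \<tau>'L: "\<tau>' x \<le> L" if "x \<in> space M" for x
    unfolding \<tau>'_def Gd_def using Bad_iff[OF that, of L] L1 by auto
  have block: "(\<Sum>k<\<tau>' x. a ((T^^k) x)) \<le> real (\<tau>' x) * c x" if x: "x \<in> space M" for x
  proof (cases "x \<in> Gd")
    case True
    then have "(\<Sum>k<\<tau>' x. a ((T^^k) x)) = 0" by (simp add: \<tau>'_def a_def)
    then show ?thesis using c_pos[of x] by simp
  next
    case False
    then have t: "\<tau>' x = \<tau> x" by (simp add: \<tau>'_def)
    have "(\<Sum>k<\<tau>' x. a ((T^^k) x)) \<le> (\<Sum>k<\<tau> x. indicator B ((T^^k) x))"
      unfolding t by (intro sum_mono) (rule a01(2))
    also have "\<dots> = real (\<tau> x) * savg B (\<tau> x) x"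
      unfolding savg_def using \<tau>P[of x] by simp
    also have "\<dots> \<le> real (\<tau> x) * c x"
      unfolding c_def using \<tau>P[of x] by (intro mult_left_mono) auto
    finally show ?thesis by (simp add: t)
  qed
  have tile: "\<forall>x\<in>space M. (\<Sum>k<m. a ((T^^k) x)) \<le> (real m + real L) * c x" for m
  proof (induction m rule: less_induct)
    case (less m)
    show ?case
    proof
      fix x assume x: "x \<in> space M"
      show "(\<Sum>k<m. a ((T^^k) x)) \<le> (real m + real L) * c x"
      proof (cases "m < \<tau>' x")
        case True
        have "(\<Sum>k<m. a ((T^^k) x)) \<le> (\<Sum>k<\<tau>' x. a ((T^^k) x))"
          using True a01 by (intro sum_mono2) auto
        also have "\<dots> \<le> real (\<tau>' x) * c x" using block[OF x] .
        also have "\<dots> \<le> (real m + real L) * c x"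
          using \<tau>'L[OF x] c_pos[of x] by (intro mult_right_mono) auto
        finally show ?thesis .
      next
        case False
        define j where "j = \<tau>' x"
        define d where "d = m - j"
        have m: "m = j + d" using False by (simp add: j_def d_def)
        have dm: "d < m" using \<tau>'1[of x] False by (simp add: j_def d_def)
        define y where "y = (T^^j) x"
        have y: "y \<in> space M" using Tn_space[OF x] by (simp add: y_def)
        have eq: "(T^^(j + k)) x = (T^^k) y" for k
          by (metis (no_types) add.commute comp_apply funpow_add y_def)
        have "(\<Sum>k<m. a ((T^^k) x)) = (\<Sum>k<j. a ((T^^k) x)) + (\<Sum>k<d. a ((T^^k) y))"
          unfolding m sum_split_nat eq ..
        also have "\<dots> \<le> real j * c x + (real d + real L) * c y"
          using block[OF x] less[rule_format, OF dm y] by (intro add_mono) (simp_all add: j_def)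
        also have "c y = c x" by (simp add: y_def c_iter)
        also have "real j * c x + (real d + real L) * c x = (real m + real L) * c x"
          by (simp add: m algebra_simps)
        finally show ?thesis .
      qed
    qed
  qed
  have aint: "integrable M (\<lambda>x. a ((T^^k) x))" for k
  proof -
    have "(\<lambda>x. a ((T^^k) x)) \<in> borel_measurable M"
      unfolding a_def using B Gds by (intro ind_meas) auto
    then show ?thesis using a01 by (intro integrable_const_bound[of _ 1]) (auto simp: a_def indicator_def)
  qed
  have aI: "integral\<^sup>L M (\<lambda>x. a ((T^^k) x)) = measure M (B - Gd)" for k
  proof -
    have "integral\<^sup>L M (\<lambda>x. a ((T^^k) x)) = integral\<^sup>L M (indicator (preimg_iter M T k (B - Gd)) :: 'a \<Rightarrow> real)"
      by (intro Bochner_Integration.integral_cong) (auto simp: a_def preimg_iter_def indicator_def)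
    also have "\<dots> = measure M (preimg_iter M T k (B - Gd))"
      by (simp add: preimg_iter_def Int_absorb2)
    also have "\<dots> = measure M (B - Gd)" using B Gds by (intro pre_measure) auto
    finally show ?thesis .
  qed
  have cint: "integrable M c" unfolding c_def using Gint by auto
  have cI: "integral\<^sup>L M c = ?I + \<epsilon>" unfolding c_def using Gint by (simp add: prob_space)
  have main: "real m * measure M (B - Gd) \<le> (real m + real L) * (?I + \<epsilon>)" for m
  proof -
    have "real m * measure M (B - Gd) = integral\<^sup>L M (\<lambda>x. \<Sum>k<m. a ((T^^k) x))"
      using aint by (simp add: aI)
    also have "\<dots> \<le> integral\<^sup>L M (\<lambda>x. (real m + real L) * c x)"
      using tile[of m] aint cint by (intro integral_mono) auto
    also have "\<dots> = (real m + real L) * (?I + \<epsilon>)" using cint cI by simp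
    finally show ?thesis .
  qed
  have BGd: "measure M B - \<epsilon> \<le> measure M (B - Gd)"
  proof -
    have "measure M B \<le> measure M ((B - Gd) \<union> Gd)" using B Gds by (intro finite_measure_mono) auto
    also have "\<dots> \<le> measure M (B - Gd) + measure M Gd" using B Gds by (intro measure_subadditive) auto
    finally show ?thesis using LB Gd_def by simp
  qed
  obtain m :: nat where m: "real L / \<epsilon> < real m" using reals_Archimedean2 by blast
  have "0 < real L / \<epsilon>" using L1 \<epsilon>(1) by (simp add: divide_pos_pos)
  then have mpos: "0 < real m" using m by linarith
  have mL: "real L < real m * \<epsilon>" using m \<epsilon> by (simp add: divide_less_eq mult.commute)
  have "real m * (measure M B - \<epsilon>) \<le> (real m + real L) * (?I + \<epsilon>)"
    using main[of m] BGd mpos by (meson mult_left_mono less_imp_le order.trans)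
  also have "\<dots> = real m * (?I + \<epsilon>) + real L * (?I + \<epsilon>)" by (simp add: algebra_simps)
  also have "real L * (?I + \<epsilon>) \<le> real m * \<epsilon> * 2"
  proof -
    have "0 \<le> ?I" using G_nonneg by (simp add: integral_nonneg)
    then have "real L * (?I + \<epsilon>) \<le> real L * 2" using I1 \<epsilon> by (intro mult_left_mono) auto
    also have "\<dots> \<le> real m * \<epsilon> * 2" using mL by simp
    finally show ?thesis .
  qed
  finally have "real m * (measure M B - \<epsilon>) \<le> real m * (?I + 3 * \<epsilon>)" by (simp add: algebra_simps)
  then have "measure M B - \<epsilon> \<le> ?I + 3 * \<epsilon>" using mpos by simp
  then show "measure M B \<le> ?I + e" using \<epsilon> by linarith
qed

end

context mpsl begin

lemma part3c:
  assumes erg: "ergodic M T"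
  shows "\<forall>A\<in>sets M. \<forall>B\<in>sets M. measure M B > 0 \<longrightarrow>
              liminf (ratio_seq M T A B) \<le> ereal (measure M A)"
proof (intro ballI impI)
  fix A B assume A: "A \<in> sets M" and B: "B \<in> sets M" and pos: "measure M B > 0"
  show "liminf (ratio_seq M T A B) \<le> ereal (measure M A)"
  proof (rule ccontr)
    assume "\<not> ?thesis"
    then have "ereal (measure M A) < liminf (ratio_seq M T A B)" by simp
    then obtain z where z1: "ereal (measure M A) < z" and z2: "z < liminf (ratio_seq M T A B)"
      using dense by blast
    obtain c where zc: "z = ereal c"
      using z1 z2 by (cases z) auto
    have cA: "measure M A < c" using z1 zc by simp
    from less_LiminfD[OF z2[unfolded zc]] obtain n0 where n0: "\<And>n. n \<ge> n0 \<Longrightarrow> c < rr A B n"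
      unfolding eventually_sequentially ratio_rr by auto
    have Pc: "c * measure M B < P A B n" if "n \<ge> n0" for n
      using n0[OF that] pos by (simp add: rr_def less_divide_eq)
    have c1: "c < 1"
    proof -
      have "c * measure M B < measure M B" using Pc[of n0] P_le[OF B, of A n0] by simp
      then show ?thesis using pos by simp
    qed
    define B' where "B' = preimg_iter M T n0 B"
    have B'1: "B' \<in> sets M" using B by (simp add: B'_def)
    have B'2: "measure M B' = measure M B" using B by (simp add: B'_def pre_measure)
    define A' where "A' = space M - A"
    have A'1: "A' \<in> sets M" using A by (simp add: A'_def)
    have A'2: "measure M A' = 1 - measure M A" using A by (simp add: A'_def prob_compl)
    have PA': "P A' B' n < (1 - c) * measure M B" for n
    proof -
      have "P A B' n + P A' B' n = measure M B'" unfolding A'_def using P_compl[OF A B'1] .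
      moreover have "P A B' n = P A B (n + n0)" by (simp add: P_def B'_def pre_add)
      ultimately show ?thesis using Pc[of "n + n0"] B'2 by (simp add: algebra_simps)
    qed
    let ?G = "G B'"
    let ?\<gamma> = "integral\<^sup>L M ?G"
    have Gm: "?G \<in> borel_measurable M" using G_meas[OF B'1] .
    have KW': "measure M B \<le> ?\<gamma>" using KW[OF B'1] B'2 by simp
    have aeG: "AE x in M. ?G x = ?\<gamma>"
      using inv_const[OF erg Gm] G_nonneg G_le1 G_inv by (simp add: abs_le_iff)
    define u where "u n x = ennreal (indicator A' x * savg B' n x)" for n x
    have um: "u n \<in> borel_measurable M" for n
      unfolding u_def using A'1 savg_meas[OF B'1] by measurable
    have lim_u: "liminf (\<lambda>n. u n x) = ennreal (indicator A' x * ?G x)" for x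
    proof (cases "x \<in> A'")
      case True
      have "liminf (\<lambda>n. u n x) = liminf (\<lambda>n. e2ennreal (ereal (savg B' n x)))"
        using True by (simp add: u_def)
      also have "\<dots> = e2ennreal (gl B' x)" unfolding gl_def
        by (rule Liminf_compose_continuous_mono[OF continuous_on_e2ennreal _ sequentially_bot])
           (simp add: mono_def e2ennreal_mono)
      also have "\<dots> = ennreal (indicator A' x * ?G x)" using True by (simp add: gl_ereal)
      finally show ?thesis .
    next
      case False
      then show ?thesis by (simp add: u_def Liminf_const)
    qed
    have fatou: "(\<integral>\<^sup>+ x. liminf (\<lambda>n. u n x) \<partial>M) \<le> liminf (\<lambda>n. integral\<^sup>N M (u n))"
      by (rule nn_integral_liminf[OF um])
    have ind_int: "integrable M (\<lambda>x. indicator A' x * f x)" if "f \<in> borel_measurable M" "\<And>x. 0 \<le> f x \<and> f x \<le> 1" for f :: "'a \<Rightarrow> real"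
    proof (rule integrable_const_bound[where B=1])
      show "AE x in M. norm (indicator A' x * f x) \<le> 1" using that by (auto simp: indicator_def)
      show "(\<lambda>x. indicator A' x * f x) \<in> borel_measurable M"
        using that A'1 by (intro borel_measurable_times borel_measurable_indicator) auto
    qed
    have left: "(\<integral>\<^sup>+ x. liminf (\<lambda>n. u n x) \<partial>M) = ennreal (?\<gamma> * measure M A')"
    proof -
      have "(\<integral>\<^sup>+ x. liminf (\<lambda>n. u n x) \<partial>M) = (\<integral>\<^sup>+ x. ennreal (indicator A' x * ?G x) \<partial>M)"
        by (simp add: lim_u)
      also have "\<dots> = ennreal (integral\<^sup>L M (\<lambda>x. indicator A' x * ?G x))"
        using ind_int[OF Gm] G_nonneg G_le1 by (intro nn_integral_eq_integral) auto
      also have "integral\<^sup>L M (\<lambda>x. indicator A' x * ?G x) = integral\<^sup>L M (\<lambda>x. indicator A' x * ?\<gamma>)"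
        using aeG A'1 Gm by (intro integral_cong_AE) auto
      also have "\<dots> = ?\<gamma> * measure M A'" using A'1 by simp
      finally show ?thesis .
    qed
    have right: "integral\<^sup>N M (u n) \<le> ennreal ((1 - c) * measure M B)" if n1: "n \<ge> 1" for n
    proof -
      have "integral\<^sup>N M (u n) = ennreal (integral\<^sup>L M (\<lambda>x. indicator A' x * savg B' n x))"
        unfolding u_def using ind_int[OF savg_meas[OF B'1]] savg_nonneg savg_le1
        by (intro nn_integral_eq_integral) auto
      also have "integral\<^sup>L M (\<lambda>x. indicator A' x * savg B' n x)
          = integral\<^sup>L M (\<lambda>x. (\<Sum>k<n. indicator (A' \<inter> preimg_iter M T k B') x) / real n)"
        by (intro Bochner_Integration.integral_cong)
           (auto simp: savg_def preimg_iter_def indicator_def sum_distrib_left)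
      also have "\<dots> = (\<Sum>k<n. P A' B' k) / real n"
      proof -
        have "integral\<^sup>L M (\<lambda>x. \<Sum>k<n. indicator (A' \<inter> preimg_iter M T k B') x :: real)
            = (\<Sum>k<n. P A' B' k)"
        proof -
          have "integral\<^sup>L M (\<lambda>x. \<Sum>k<n. indicator (A' \<inter> preimg_iter M T k B') x :: real)
            = (\<Sum>k<n. integral\<^sup>L M (indicator (A' \<inter> preimg_iter M T k B') :: 'a \<Rightarrow> real))"
            using A'1 B'1 by (intro Bochner_Integration.integral_sum integrable_real_indicator) (auto simp: less_top[symmetric])
          also have "\<dots> = (\<Sum>k<n. P A' B' k)"
            by (intro sum.cong) (auto simp: P_def preimg_iter_def Int_assoc)
          finally show ?thesis .
        qed
        then show ?thesis by simp
      qed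
      also have "(\<Sum>k<n. P A' B' k) / real n \<le> (1 - c) * measure M B"
      proof -
        have "(\<Sum>k<n. P A' B' k) \<le> (\<Sum>k<n. (1 - c) * measure M B)"
          using PA' by (intro sum_mono) (simp add: less_imp_le)
        then show ?thesis using n1 by (simp add: divide_le_eq mult.commute)
      qed
      finally show ?thesis by (simp add: ennreal_leI)
    qed
    have "liminf (\<lambda>n. integral\<^sup>N M (u n)) \<le> ennreal ((1 - c) * measure M B)"
      using right by (intro Liminf_le) (auto simp: eventually_sequentially)
    with fatou left have "ennreal (?\<gamma> * measure M A') \<le> ennreal ((1 - c) * measure M B)" by simp
    then have le: "?\<gamma> * measure M A' \<le> (1 - c) * measure M B"
      using c1 pos by (subst (asm) ennreal_le_iff) auto
    have "measure M B * measure M A' \<le> ?\<gamma> * measure M A'"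
      using KW' by (intro mult_right_mono) auto
    with le have "measure M B * (1 - measure M A) \<le> measure M B * (1 - c)"
      by (simp add: A'2 mult.commute)
    then have "1 - measure M A \<le> 1 - c" using pos by simp
    with cA show False by simp
  qed
qed

end

theorem mainTheorem17:
  fixes M :: "'a measure" and T :: "'a \<Rightarrow> 'a"
  assumes "mps M T"
  shows "(mixing M T \<longleftrightarrow>
           (\<forall>A\<in>sets M. \<forall>B\<in>sets M. measure M B > 0 \<longrightarrow>
              limsup (ratio_seq M T A B) \<le> ereal (measure M A)))
       \<and> (weakly_mixing M T \<longleftrightarrow>
           (\<forall>A\<in>sets M. \<forall>B\<in>sets M. measure M B > 0 \<longrightarrow>
              (\<exists>N::nat set. zero_density N \<and>
                 Limsup (sequentially \<sqinter> principal (- N)) (ratio_seq M T A B) \<le> ereal (measure M A))))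
       \<and> (ergodic M T \<longleftrightarrow>
           (\<forall>A\<in>sets M. \<forall>B\<in>sets M. measure M B > 0 \<longrightarrow>
              (\<exists>N::nat set. infinite (- N) \<and>
                 Limsup (sequentially \<sqinter> principal (- N)) (ratio_seq M T A B) \<le> ereal (measure M A))))
       \<and> (ergodic M T \<longleftrightarrow>
           (\<forall>A\<in>sets M. \<forall>B\<in>sets M. measure M B > 0 \<longrightarrow>
              liminf (ratio_seq M T A B) \<le> ereal (measure M A)))"
proof -
  interpret mpsl M T
    using assms unfolding mps_def mpsl_def mpsl_axioms_def by auto
  show ?thesis
    using part1 part2 part3a part3b part3c by blast
qed


end
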